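(* Let $A=(a_{ij})_{1\le i,j\le n}$ be a complex Nekrasov matrix, let $\epsilon_1,\dots,\epsilon_n$ be real numbers satisfying either the conditions (C1) or the conditions (C2) below, and let $S=\mathrm{diag}\left(\frac{h_i(A)+\epsilon_i}{|a_{ii}|}\right)_{i=1}^n$. Define $z_1(A):=1$ and $z_i(A):=\sum_{j=1}^{i-1}|a_{ij}|\frac{z_j(A)}{|a_{jj}|}+1$ for $i=2,\dots,n$. Then $$\|A^{-1}\|_\infty\le \max_{i\in N}\left(\frac{h_i(A)+\epsilon_i}{|a_{ii}|}\right)\,\max_{i\in N}\frac{z_i(A)}{h_i(A)+\epsilon_i-h_i(AS)},$$ where all denominators $h_i(A)+\epsilon_i-h_i(AS)$ are positive.
   Context: For a complex $n\times n$ matrix $A=(a_{ij})$ with $a_{ii}\ne 0$ for all $i$, define recursively $h_1(A):=\sum_{j\ne 1}|a_{1j}|$ and $h_i(A):=\sum_{j=1}^{i-1}|a_{ij}|\frac{h_j(A)}{|a_{jj}|}+\sum_{j=i+1}^{n}|a_{ij}|$ for $i=2,\dots,n$ (the same definition is applied to $AS$ to obtain $h_i(AS)$). $A$ is a Nekrasov matrix if $|a_{ii}|>h_i(A)$ for all $i\in N=\{1,\dots,n\}$. $\|\cdot\|_\infty$ is the maximum absolute row sum norm. Conditions (C1): $\epsilon_1>0$, and for $i=2,\dots,n$: $0<\epsilon_i\le |a_{ii}|-h_i(A)$ and $\epsilon_i>\sum_{j=1}^{i-1}\frac{|a_{ij}|\epsilon_j}{|a_{jj}|}$. Conditions (C2):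 let $k$ be the smallest index such that $a_{kj}=0$ for all $j>k$; $\epsilon_i=0$ for $i=1,\dots,k-1$, and for $i=k,\dots,n$: $0<\epsilon_i<|a_{ii}|-h_i(A)$ and $\epsilon_i>\sum_{j=k}^{i-1}\frac{|a_{ij}|\epsilon_j}{|a_{jj}|}$ (empty sum for $i=k$). *)

theory Defs
  imports "Jordan_Normal_Form.Matrix" Complex_Main
begin

text \<open>Indices are 0-based: index i here corresponds to index i+1 of the paper.
  The dimension n of the matrix is dim_col A.\<close>

function nek_h :: "complex mat \<Rightarrow> nat \<Rightarrow> real" where
  "nek_h A i = (\<Sum>j<i. cmod (A $$ (i,j)) * nek_h A j / cmod (A $$ (j,j)))
              + (\<Sum>j\<in>{i<..<dim_col A}. cmod (A $$ (i,j)))"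
  by pat_completeness auto
termination
  by (relation "measure (\<lambda>(A,i). i)") auto

function nek_z :: "complex mat \<Rightarrow> nat \<Rightarrow> real" where
  "nek_z A i = (\<Sum>j<i. cmod (A $$ (i,j)) * nek_z A j / cmod (A $$ (j,j))) + 1"
  by pat_completeness auto
termination
  by (relation "measure (\<lambda>(A,i). i)") auto

definition nekrasov :: "complex mat \<Rightarrow> nat \<Rightarrow> bool" where
  "nekrasov A n \<longleftrightarrow> A \<in> carrier_mat n n \<and>
     (\<forall>i<n. A $$ (i,i) \<noteq> 0) \<and> (\<forall>i<n. cmod (A $$ (i,i)) > nek_h A i)"

definition norm_inf_mat :: "complex mat \<Rightarrow> real" where
  "norm_inf_mat B = Max ({0} \<union> (\<lambda>i. \<Sum>j<dim_col B. cmod (B $$ (i,j))) ` {..<dim_row B})"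

definition cond_C1 :: "complex mat \<Rightarrow> nat \<Rightarrow> (nat \<Rightarrow> real) \<Rightarrow> bool" where
  "cond_C1 A n \<epsilon> \<longleftrightarrow> \<epsilon> 0 > 0 \<and>
     (\<forall>i. 1 \<le> i \<and> i < n \<longrightarrow>
        0 < \<epsilon> i \<and> \<epsilon> i \<le> cmod (A $$ (i,i)) - nek_h A i \<and>
        \<epsilon> i > (\<Sum>j<i. cmod (A $$ (i,j)) * \<epsilon> j / cmod (A $$ (j,j))))"

definition nek_k :: "complex mat \<Rightarrow> nat \<Rightarrow> nat" where
  "nek_k A n = (LEAST k. k < n \<and> (\<forall>j. k < j \<and> j < n \<longrightarrow> A $$ (k,j) = 0))"

definition cond_C2 :: "complex mat \<Rightarrow> nat \<Rightarrow> (nat \<Rightarrow> real) \<Rightarrow> bool" where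
  "cond_C2 A n \<epsilon> \<longleftrightarrow>
     (\<forall>i < nek_k A n. \<epsilon> i = 0) \<and>
     (\<forall>i. nek_k A n \<le> i \<and> i < n \<longrightarrow>
        0 < \<epsilon> i \<and> \<epsilon> i < cmod (A $$ (i,i)) - nek_h A i \<and>
        \<epsilon> i > (\<Sum>j\<in>{nek_k A n..<i}. cmod (A $$ (i,j)) * \<epsilon> j / cmod (A $$ (j,j))))"

definition nek_S :: "complex mat \<Rightarrow> nat \<Rightarrow> (nat \<Rightarrow> real) \<Rightarrow> complex mat" where
  "nek_S A n \<epsilon> = mat n n (\<lambda>(i,j). if i = j
       then complex_of_real ((nek_h A i + \<epsilon> i) / cmod (A $$ (i,i))) else 0)"

end

theory Submission
  imports Defs "Jordan_Normal_Form.Determinant"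
begin
declare nek_h.simps[simp del] nek_z.simps[simp del]

lemma nek_h_nonneg: "0 \<le> nek_h A i"
proof (induction i rule: less_induct)
  case (less i)
  show ?case by (subst nek_h.simps) (intro add_nonneg_nonneg sum_nonneg; use less in auto)
qed

lemma nek_z_ge1: "1 \<le> nek_z A i"
proof (induction i rule: less_induct)
  case (less i)
  have "0 \<le> (\<Sum>j<i. cmod (A $$ (i,j)) * nek_z A j / cmod (A $$ (j,j)))"
    by (intro sum_nonneg divide_nonneg_nonneg mult_nonneg_nonneg) (use less in force)+
  then show ?case by (subst nek_z.simps) simp
qed

lemma sum_split3:
  fixes f :: "nat \<Rightarrow> 'a::comm_monoid_add"
  assumes "i < n"
  shows "(\<Sum>j<n. f j) = (\<Sum>j<i. f j) + f i + (\<Sum>j\<in>{i<..<n}. f j)"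
proof -
  have "{..<n} = {..<i} \<union> {i} \<union> {i<..<n}" using assms by auto
  moreover have "sum f ({..<i} \<union> {i<..<n}) = sum f {..<i} + sum f {i<..<n}"
    by (rule sum.union_disjoint) auto
  ultimately show ?thesis by (simp add: algebra_simps)
qed

lemma nek_key:
  fixes M :: "complex mat" and w :: "nat \<Rightarrow> complex"
  assumes M: "M \<in> carrier_mat n n" and d: "\<forall>i<n. M$$(i,i) \<noteq> 0"
    and h: "\<forall>i<n. nek_h M i < cmod (M$$(i,i))"
    and y: "\<forall>i<n. cmod (\<Sum>j<n. M$$(i,j) * w j) \<le> Y" and i: "i < n"
  shows "cmod (w i) \<le> Max ((\<lambda>i. nek_z M i / (cmod (M$$(i,i)) - nek_h M i)) ` {..<n}) * Y"
proof -
  define r where "r = Max ((\<lambda>j. cmod (w j)) ` {..<n})"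
  have wr: "cmod (w j) \<le> r" if "j<n" for j unfolding r_def using that by (intro Max_ge) auto
  have Y0: "0 \<le> Y" using y i by (meson norm_ge_zero order_trans)
  have dc: "dim_col M = n" using M by auto
  have ind: "cmod (M$$(i,i)) * cmod (w i) \<le> nek_h M i * r + nek_z M i * Y" if "i<n" for i
    using that
  proof (induction i rule: less_induct)
    case (less i)
    let ?m = "\<lambda>j. M$$(i,j)"
    have sp: "(\<Sum>j<n. ?m j * w j) = (\<Sum>j<i. ?m j * w j) + ?m i * w i + (\<Sum>j\<in>{i<..<n}. ?m j * w j)"
      using less.prems by (rule sum_split3)
    have "cmod (?m i * w i) = cmod ((\<Sum>j<n. ?m j * w j) - (\<Sum>j<i. ?m j * w j) - (\<Sum>j\<in>{i<..<n}. ?m j * w j))"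
      unfolding sp by simp
    also have "\<dots> \<le> cmod (\<Sum>j<n. ?m j * w j) + cmod (\<Sum>j<i. ?m j * w j) + cmod (\<Sum>j\<in>{i<..<n}. ?m j * w j)"
      by (meson norm_triangle_ineq4 add_right_mono order_trans)
    also have "\<dots> \<le> Y + (\<Sum>j<i. cmod (?m j) * ((nek_h M j * r + nek_z M j * Y) / cmod (M$$(j,j))))
                 + (\<Sum>j\<in>{i<..<n}. cmod (?m j) * r)"
    proof (intro add_mono)
      show "cmod (\<Sum>j<n. ?m j * w j) \<le> Y" using y less.prems by auto
      have "cmod (\<Sum>j<i. ?m j * w j) \<le> (\<Sum>j<i. cmod (?m j) * cmod (w j))"
        by (rule order_trans[OF norm_sum]) (simp add: norm_mult)
      also have "\<dots> \<le> (\<Sum>j<i. cmod (?m j) * ((nek_h M j * r + nek_z M j * Y) / cmod (M$$(j,j))))"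
      proof (intro sum_mono mult_left_mono)
        fix j assume j: "j \<in> {..<i}"
        have jn: "j < n" using j less.prems by auto
        have pos: "0 < cmod (M$$(j,j))" using d jn by auto
        have "cmod (M$$(j,j)) * cmod (w j) \<le> nek_h M j * r + nek_z M j * Y"
          using less.IH j jn by auto
        then show "cmod (w j) \<le> (nek_h M j * r + nek_z M j * Y) / cmod (M$$(j,j))"
          using pos by (simp add: field_simps)
      qed simp
      finally show "cmod (\<Sum>j<i. ?m j * w j) \<le> \<dots>" .
      have "cmod (\<Sum>j\<in>{i<..<n}. ?m j * w j) \<le> (\<Sum>j\<in>{i<..<n}. cmod (?m j) * cmod (w j))"
        by (rule order_trans[OF norm_sum]) (simp add: norm_mult)
      also have "\<dots> \<le> (\<Sum>j\<in>{i<..<n}. cmod (?m j) * r)"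
        by (intro sum_mono mult_left_mono) (use wr in auto)
      finally show "cmod (\<Sum>j\<in>{i<..<n}. ?m j * w j) \<le> \<dots>" .
    qed
    also have "\<dots> = nek_h M i * r + nek_z M i * Y"
    proof -
      have e1: "(\<Sum>j<i. cmod (?m j) * ((nek_h M j * r + nek_z M j * Y) / cmod (M$$(j,j))))
         = r * (\<Sum>j<i. cmod (?m j) * nek_h M j / cmod (M$$(j,j))) + Y * (\<Sum>j<i. cmod (?m j) * nek_z M j / cmod (M$$(j,j)))"
        by (simp add: sum_distrib_left sum.distrib[symmetric] add_divide_distrib algebra_simps)
      have e2: "(\<Sum>j\<in>{i<..<n}. cmod (?m j) * r) = r * (\<Sum>j\<in>{i<..<n}. cmod (?m j))"
        by (simp add: sum_distrib_left mult.commute)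
      show ?thesis
        unfolding nek_h.simps[of M i] nek_z.simps[of M i] e1 e2 dc by (simp add: algebra_simps)
    qed
    finally show ?case by (simp add: norm_mult)
  qed
  obtain p where p: "p < n" "r = cmod (w p)"
    unfolding r_def using i by (metis (no_types, lifting) Max_in empty_iff finite_imageI finite_lessThan image_iff image_is_empty lessThan_iff)
  have "cmod (M$$(p,p)) * r \<le> nek_h M p * r + nek_z M p * Y" using ind p by auto
  hence "(cmod (M$$(p,p)) - nek_h M p) * r \<le> nek_z M p * Y" by (simp add: algebra_simps)
  moreover have pos: "0 < cmod (M$$(p,p)) - nek_h M p" using h p by auto
  ultimately have "r \<le> nek_z M p / (cmod (M$$(p,p)) - nek_h M p) * Y"
    by (simp add: field_simps)
  also have "\<dots> \<le> Max ((\<lambda>i. nek_z M i / (cmod (M$$(i,i)) - nek_h M i)) ` {..<n}) * Y"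
    by (intro mult_right_mono Max_ge) (use p Y0 in auto)
  finally show ?thesis using wr[OF i] by linarith
qed


lemma nek_k_facts:
  assumes "0 < n"
  shows "nek_k A n < n"
    and "\<And>i. i < nek_k A n \<Longrightarrow> \<exists>j. i < j \<and> j < n \<and> A $$ (i,j) \<noteq> 0"
proof -
  let ?P = "\<lambda>k. k < n \<and> (\<forall>j. k < j \<and> j < n \<longrightarrow> A $$ (k,j) = 0)"
  have "?P (n - 1)" using assms by auto
  hence "?P (nek_k A n)" unfolding nek_k_def by (rule LeastI)
  thus "nek_k A n < n" by simp
  fix i assume i: "i < nek_k A n"
  hence "\<not> ?P i" unfolding nek_k_def by (rule not_less_Least)
  moreover have "i < n" using i \<open>?P (nek_k A n)\<close> by simp
  ultimately show "\<exists>j. i < j \<and> j < n \<and> A $$ (i,j) \<noteq> 0" by auto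
qed

lemma mult_diag_entry:
  fixes A :: "complex mat"
  assumes A: "A \<in> carrier_mat n n" and i: "i < n" and j: "j < n"
  shows "(A * nek_S A n \<epsilon>) $$ (i,j) = A $$ (i,j) * complex_of_real ((nek_h A j + \<epsilon> j) / cmod (A $$ (j,j)))"
proof -
  have "(A * nek_S A n \<epsilon>) $$ (i,j) = (\<Sum>k\<in>{0..<n}. A $$ (i,k) * (if k = j then complex_of_real ((nek_h A k + \<epsilon> k) / cmod (A $$ (k,k))) else 0))"
    using A i j by (simp add: nek_S_def scalar_prod_def)
  also have "\<dots> = A $$ (i,j) * complex_of_real ((nek_h A j + \<epsilon> j) / cmod (A $$ (j,j)))"
    using j by (simp add: if_distrib cong: if_cong)
  finally show ?thesis .
qed

theorem mainTheorem5:
  fixes A :: "complex mat" and n :: nat and \<epsilon> :: "nat \<Rightarrow> real"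
  assumes "0 < n"
    and "nekrasov A n"
    and "cond_C1 A n \<epsilon> \<or> cond_C2 A n \<epsilon>"
  shows "(\<forall>i<n. nek_h A i + \<epsilon> i - nek_h (A * nek_S A n \<epsilon>) i > 0)
    \<and> invertible_mat A
    \<and> (\<forall>B. B \<in> carrier_mat n n \<and> inverts_mat A B \<and> inverts_mat B A \<longrightarrow>
         norm_inf_mat B \<le>
           Max ((\<lambda>i. (nek_h A i + \<epsilon> i) / cmod (A $$ (i,i))) ` {..<n})
         * Max ((\<lambda>i. nek_z A i / (nek_h A i + \<epsilon> i - nek_h (A * nek_S A n \<epsilon>) i)) ` {..<n}))"
proof -
  have A: "A \<in> carrier_mat n n" and dA: "\<forall>i<n. A $$ (i,i) \<noteq> 0"
    and hA: "\<forall>i<n. nek_h A i < cmod (A $$ (i,i))"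
    using assms(2) unfolding nekrasov_def by auto
  define e where "e i = nek_h A i + \<epsilon> i" for i
  define s where "s i = e i / cmod (A $$ (i,i))" for i
  define M where "M = A * nek_S A n \<epsilon>"
  define k where "k = nek_k A n"
  have kn: "k < n" and kex: "\<And>i. i < k \<Longrightarrow> \<exists>j. i < j \<and> j < n \<and> A $$ (i,j) \<noteq> 0"
    using nek_k_facts[OF assms(1), where A=A] unfolding k_def by auto
  have ca: "0 < cmod (A $$ (i,i))" if "i < n" for i using dA that by auto
  have epos: "0 < e i" if i: "i < n" for i
  proof (cases "cond_C1 A n \<epsilon>")
    case True
    then have "0 < \<epsilon> i" unfolding cond_C1_def using i by (cases i) auto
    then show ?thesis unfolding e_def using nek_h_nonneg[of A i] by linarith
  next
    case False
    then have C2: "cond_C2 A n \<epsilon>" using assms(3) by auto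
    show ?thesis
    proof (cases "i < k")
      case True
      obtain j where j: "i < j" "j < n" "A $$ (i,j) \<noteq> 0" using kex[OF True] by auto
      have "cmod (A $$ (i,j)) \<le> (\<Sum>j\<in>{i<..<dim_col A}. cmod (A $$ (i,j)))"
        using j A by (intro member_le_sum) auto
      moreover have "0 \<le> (\<Sum>j<i. cmod (A $$ (i,j)) * nek_h A j / cmod (A $$ (j,j)))"
        by (intro sum_nonneg divide_nonneg_nonneg mult_nonneg_nonneg nek_h_nonneg) auto
      moreover have "0 < cmod (A $$ (i,j))" using j by simp
      ultimately have "0 < nek_h A i" unfolding nek_h.simps[of A i] by linarith
      moreover have "\<epsilon> i = 0" using C2 True unfolding cond_C2_def k_def by auto
      ultimately show ?thesis unfolding e_def by simp
    next
      case False
      then have "0 < \<epsilon> i" using C2 i unfolding cond_C2_def k_def by auto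
      then show ?thesis unfolding e_def using nek_h_nonneg[of A i] by linarith
    qed
  qed
  have spos: "0 < s i" if "i < n" for i unfolding s_def using epos[OF that] ca[OF that] by simp
  have sle1: "s j \<le> 1" if j: "j < n" "0 < j" for j
  proof -
    have "e j \<le> cmod (A $$ (j,j))"
    proof (cases "cond_C1 A n \<epsilon>")
      case True
      then have "\<epsilon> j \<le> cmod (A $$ (j,j)) - nek_h A j" unfolding cond_C1_def using j by auto
      then show ?thesis unfolding e_def by linarith
    next
      case False
      then have C2: "cond_C2 A n \<epsilon>" using assms(3) by auto
      show ?thesis
      proof (cases "j < k")
        case True
        then have "\<epsilon> j = 0" using C2 unfolding cond_C2_def k_def by auto
        then show ?thesis using hA j unfolding e_def by force
      next
        case False
        then have "\<epsilon> j < cmod (A $$ (j,j)) - nek_h A j" using C2 j unfolding cond_C2_def k_def by auto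
        then show ?thesis unfolding e_def by linarith
      qed
    qed
    then show ?thesis unfolding s_def using ca[OF j(1)] by simp
  qed
  have slt1_C2: "s j < 1" if j: "j < n" and C2: "cond_C2 A n \<epsilon>" for j
  proof -
    have "e j < cmod (A $$ (j,j))"
    proof (cases "j < k")
      case True
      then have "\<epsilon> j = 0" using C2 unfolding cond_C2_def k_def by auto
      then show ?thesis using hA j unfolding e_def by force
    next
      case False
      then have "\<epsilon> j < cmod (A $$ (j,j)) - nek_h A j" using C2 j unfolding cond_C2_def k_def by auto
      then show ?thesis unfolding e_def by linarith
    qed
    then show ?thesis unfolding s_def using ca[OF j(1)] by simp
  qed
  have M: "M \<in> carrier_mat n n" unfolding M_def nek_S_def using A by auto
  have Mij: "M $$ (i,j) = A $$ (i,j) * complex_of_real (s j)" if "i < n" "j < n" for i j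
    unfolding M_def s_def e_def using mult_diag_entry[OF A that] .
  have cM: "cmod (M $$ (i,j)) = cmod (A $$ (i,j)) * s j" if "i < n" "j < n" for i j
    using Mij[OF that] spos[OF that(2)] by (simp add: norm_mult)
  have cMd: "cmod (M $$ (i,i)) = e i" if "i < n" for i
    using cM[OF that that] ca[OF that] unfolding s_def by simp
  have dcM: "dim_col M = n" using M by auto
  have hM: "nek_h M i = (\<Sum>j<i. cmod (A $$ (i,j)) * nek_h M j / cmod (A $$ (j,j)))
            + (\<Sum>j\<in>{i<..<n}. cmod (A $$ (i,j)) * s j)" if i: "i < n" for i
    unfolding nek_h.simps[of M i] dcM
  proof (intro arg_cong2[where f="(+)"] sum.cong refl)
    fix j assume "j \<in> {..<i}"
    hence j: "j < n" using i by auto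
    show "cmod (M $$ (i,j)) * nek_h M j / cmod (M $$ (j,j)) = cmod (A $$ (i,j)) * nek_h M j / cmod (A $$ (j,j))"
      using cM[OF i j] cM[OF j j] spos[OF j] by simp
  next
    fix j assume "j \<in> {i<..<n}"
    hence j: "j < n" by auto
    show "cmod (M $$ (i,j)) = cmod (A $$ (i,j)) * s j" using cM[OF i j] .
  qed
  have zM: "nek_z M i = nek_z A i" if "i < n" for i
    using that
  proof (induction i rule: less_induct)
    case (less i)
    show ?case unfolding nek_z.simps[of M i] nek_z.simps[of A i]
    proof (intro arg_cong2[where f="(+)"] sum.cong refl)
      fix j assume "j \<in> {..<i}"
      hence j: "j < n" "j < i" using less.prems by auto
      show "cmod (M $$ (i,j)) * nek_z M j / cmod (M $$ (j,j)) = cmod (A $$ (i,j)) * nek_z A j / cmod (A $$ (j,j))"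
        using cM[OF less.prems j(1)] cM[OF j(1) j(1)] spos[OF j(1)] less.IH[OF j(2) j(1)] by simp
    qed
  qed
  have P1: "nek_h M i < e i" if "i < n" for i
    using that
  proof (induction i rule: less_induct)
    case (less i)
    note i = less.prems
    define H where "H = (\<Sum>j<i. cmod (A $$ (i,j)) * nek_h A j / cmod (A $$ (j,j)))"
    define E where "E = (\<Sum>j<i. cmod (A $$ (i,j)) * \<epsilon> j / cmod (A $$ (j,j)))"
    define U where "U = (\<Sum>j\<in>{i<..<n}. cmod (A $$ (i,j)))"
    define Us where "Us = (\<Sum>j\<in>{i<..<n}. cmod (A $$ (i,j)) * s j)"
    have hAi: "nek_h A i = H + U" unfolding H_def U_def nek_h.simps[of A i] using A by auto
    have "(\<Sum>j<i. cmod (A $$ (i,j)) * nek_h M j / cmod (A $$ (j,j)))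
          \<le> (\<Sum>j<i. cmod (A $$ (i,j)) * e j / cmod (A $$ (j,j)))"
    proof (intro sum_mono divide_right_mono mult_left_mono)
      fix j assume "j \<in> {..<i}"
      thus "nek_h M j \<le> e j" using less.IH i by force
    qed auto
    also have "\<dots> = H + E" unfolding H_def E_def e_def
      by (simp add: sum.distrib[symmetric] add_divide_distrib distrib_left)
    finally have hMle: "nek_h M i \<le> H + E + Us" unfolding hM[OF i] Us_def by simp
    have UsU: "Us \<le> U" unfolding Us_def U_def
      by (intro sum_mono) (use sle1 in \<open>auto intro!: mult_left_le\<close>)
    have "(E < \<epsilon> i) \<or> (E \<le> \<epsilon> i \<and> Us < U)"
    proof (cases "cond_C1 A n \<epsilon>")
      case True
      show ?thesis
      proof (cases "i = 0")
        case True
        then have "E = 0" unfolding E_def by simp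
        moreover have "0 < \<epsilon> 0" using \<open>cond_C1 A n \<epsilon>\<close> unfolding cond_C1_def by auto
        ultimately show ?thesis using True by simp
      next
        case False
        then have "1 \<le> i \<and> i < n" using i by simp
        then have "E < \<epsilon> i" using \<open>cond_C1 A n \<epsilon>\<close> unfolding cond_C1_def E_def by blast
        then show ?thesis by simp
      qed
    next
      case False
      then have C2: "cond_C2 A n \<epsilon>" using assms(3) by auto
      show ?thesis
      proof (cases "i < k")
        case True
        have "E = 0" unfolding E_def using C2 True unfolding cond_C2_def k_def
          by (intro sum.neutral) auto
        moreover have "\<epsilon> i = 0" using C2 True unfolding cond_C2_def k_def by auto
        moreover have "Us < U" unfolding Us_def U_def
        proof (rule sum_strict_mono_ex1)
          show "\<forall>j\<in>{i<..<n}. cmod (A $$ (i,j)) * s j \<le> cmod (A $$ (i,j))"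
            using sle1 by (auto intro!: mult_left_le)
          obtain j where j: "i < j" "j < n" "A $$ (i,j) \<noteq> 0" using kex[OF True] by auto
          have "0 < cmod (A $$ (i,j))" using j(3) by simp
          hence "cmod (A $$ (i,j)) * s j < cmod (A $$ (i,j)) * 1"
            using slt1_C2[OF j(2) C2] by (intro mult_strict_left_mono) auto
          then show "\<exists>j\<in>{i<..<n}. cmod (A $$ (i,j)) * s j < cmod (A $$ (i,j))"
            using j by (intro bexI[of _ j]) auto
        qed auto
        ultimately show ?thesis by simp
      next
        case False
        define g where "g j = cmod (A $$ (i,j)) * \<epsilon> j / cmod (A $$ (j,j))" for j
        have "E = sum g {..<i}" unfolding E_def g_def by simp
        also have "\<dots> = sum g {0..<k} + sum g {k..<i}"
          using sum.atLeastLessThan_concat[of 0 k i g] False by (simp add: lessThan_atLeast0)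
        also have "sum g {0..<k} = 0"
          using C2 unfolding cond_C2_def k_def g_def by (intro sum.neutral) auto
        also have "sum g {k..<i} = (\<Sum>j\<in>{k..<i}. cmod (A $$ (i,j)) * \<epsilon> j / cmod (A $$ (j,j)))"
          unfolding g_def by simp
        finally have "E = (\<Sum>j\<in>{k..<i}. cmod (A $$ (i,j)) * \<epsilon> j / cmod (A $$ (j,j)))" by simp
        then show ?thesis using C2 False i unfolding cond_C2_def k_def by auto
      qed
    qed
    then show ?case using hMle UsU hAi unfolding e_def by linarith
  qed
  have part1: "\<forall>i<n. nek_h A i + \<epsilon> i - nek_h (A * nek_S A n \<epsilon>) i > 0"
    using P1 unfolding M_def e_def by auto
  have Mv: "(A *\<^sub>v v) $ i = (\<Sum>j<n. A $$ (i,j) * v $ j)" if "i < n" "v \<in> carrier_vec n" for v i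
    using A that by (simp add: scalar_prod_def lessThan_atLeast0)
  have detA: "det A \<noteq> 0"
  proof
    assume "det A = 0"
    then obtain v where v: "v \<in> carrier_vec n" "v \<noteq> 0\<^sub>v n" "A *\<^sub>v v = 0\<^sub>v n"
      using det_0_iff_vec_prod_zero_field[OF A] by auto
    have "\<forall>i<n. cmod (\<Sum>j<n. A $$ (i,j) * v $ j) \<le> 0"
    proof (intro allI impI)
      fix i assume i: "i < n"
      have "(A *\<^sub>v v) $ i = 0" using v(3) i by simp
      then show "cmod (\<Sum>j<n. A $$ (i,j) * v $ j) \<le> 0" using Mv[OF i v(1)] by simp
    qed
    hence "cmod (v $ i) \<le> 0" if "i < n" for i
      using nek_key[OF A dA hA _ that, of "\<lambda>j. v $ j" 0] by auto
    hence "v = 0\<^sub>v n" using v(1) by (intro eq_vecI) auto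
    with v(2) show False by simp
  qed
  from det_non_zero_imp_unit[OF A detA, of "()"]
  obtain Bi where "Bi \<in> carrier_mat n n" "Bi * A = 1\<^sub>m n" "A * Bi = 1\<^sub>m n"
    unfolding Units_def ring_mat_def by auto
  hence part2: "invertible_mat A"
    unfolding invertible_mat_def inverts_mat_def using A by auto
  define maxS where "maxS = Max ((\<lambda>i. (nek_h A i + \<epsilon> i) / cmod (A $$ (i,i))) ` {..<n})"
  define maxC where "maxC = Max ((\<lambda>i. nek_z A i / (nek_h A i + \<epsilon> i - nek_h (A * nek_S A n \<epsilon>) i)) ` {..<n})"
  have maxC_eq: "maxC = Max ((\<lambda>i. nek_z M i / (cmod (M$$(i,i)) - nek_h M i)) ` {..<n})"
    unfolding maxC_def M_def[symmetric]
    by (intro arg_cong[where f=Max] image_cong refl) (simp add: zM cMd e_def)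
  have sMax: "s i \<le> maxS" if "i < n" for i
    unfolding maxS_def s_def e_def using that by (intro Max_ge) auto
  have maxC0: "0 \<le> maxC"
  proof -
    have "0 \<le> nek_z A 0 / (nek_h A 0 + \<epsilon> 0 - nek_h M 0)"
      using nek_z_ge1[of A 0] P1[OF assms(1)] unfolding e_def by simp
    also have "\<dots> \<le> maxC" unfolding maxC_def M_def using assms(1) by (intro Max_ge) auto
    finally show ?thesis .
  qed
  have maxS0: "0 \<le> maxS" using sMax[OF assms(1)] spos[OF assms(1)] by linarith
  have part3: "norm_inf_mat B \<le> maxS * maxC"
    if B: "B \<in> carrier_mat n n" and AB: "inverts_mat A B" for B
  proof -
    have AB1: "A * B = 1\<^sub>m n" using AB A unfolding inverts_mat_def by auto
    have row: "(\<Sum>j<n. cmod (B $$ (p,j))) \<le> maxS * maxC" if p: "p < n" for p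
    proof -
      define y where "y j = (if B $$ (p,j) = 0 then 0 else cnj (B $$ (p,j)) / cmod (B $$ (p,j)))" for j
      have y1: "cmod (y j) \<le> 1" for j unfolding y_def by (simp add: norm_divide)
      have By: "B $$ (p,j) * y j = complex_of_real (cmod (B $$ (p,j)))" for j
      proof (cases "B $$ (p,j) = 0")
        case False
        let ?b = "B $$ (p,j)"
        have "?b * y j = (?b * cnj ?b) / complex_of_real (cmod ?b)" unfolding y_def using False by simp
        also have "\<dots> = complex_of_real (cmod ?b) ^ 2 / complex_of_real (cmod ?b)"
          using complex_norm_square[of ?b] by simp
        also have "\<dots> = complex_of_real (cmod ?b)" using False by (simp add: power2_eq_square)
        finally show ?thesis .
      qed (simp add: y_def)
      define x where "x i = (\<Sum>j<n. B $$ (i,j) * y j)" for i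
      have xp: "x p = complex_of_real (\<Sum>j<n. cmod (B $$ (p,j)))" unfolding x_def By by simp
      have Ax: "(\<Sum>k<n. A $$ (i,k) * x k) = y i" if i: "i < n" for i
      proof -
        have "(\<Sum>k<n. A $$ (i,k) * x k) = (\<Sum>j<n. (\<Sum>k<n. A $$ (i,k) * B $$ (k,j)) * y j)"
        proof -
          have "(\<Sum>k<n. A $$ (i,k) * x k) = (\<Sum>k<n. \<Sum>j<n. A $$ (i,k) * B $$ (k,j) * y j)"
            unfolding x_def by (simp add: sum_distrib_left mult.assoc)
          also have "\<dots> = (\<Sum>j<n. \<Sum>k<n. A $$ (i,k) * B $$ (k,j) * y j)"
            by (rule sum.swap)
          also have "\<dots> = (\<Sum>j<n. (\<Sum>k<n. A $$ (i,k) * B $$ (k,j)) * y j)"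
            by (simp add: sum_distrib_right)
          finally show ?thesis .
        qed
        also have "\<dots> = (\<Sum>j<n. (if i = j then y j else 0))"
        proof (intro sum.cong refl)
          fix j assume "j \<in> {..<n}"
          hence j: "j < n" by auto
          have "(A * B) $$ (i,j) = (\<Sum>k<n. A $$ (i,k) * B $$ (k,j))"
            using A B i j by (simp add: scalar_prod_def lessThan_atLeast0)
          hence "(\<Sum>k<n. A $$ (i,k) * B $$ (k,j)) = (if i = j then 1 else 0)"
            using AB1 i j by simp
          thus "(\<Sum>k<n. A $$ (i,k) * B $$ (k,j)) * y j = (if i = j then y j else 0)"
            by simp
        qed
        also have "\<dots> = y i" using i by simp
        finally show ?thesis .
      qed
      define w where "w j = x j / complex_of_real (s j)" for j
      have Mw: "cmod (\<Sum>j<n. M $$ (i,j) * w j) \<le> 1" if i: "i < n" for i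
      proof -
        have "(\<Sum>j<n. M $$ (i,j) * w j) = (\<Sum>j<n. A $$ (i,j) * x j)"
        proof (intro sum.cong refl)
          fix j assume "j \<in> {..<n}"
          hence j: "j < n" by auto
          show "M $$ (i,j) * w j = A $$ (i,j) * x j"
            unfolding Mij[OF i j] w_def using spos[OF j] by simp
        qed
        thus ?thesis using Ax[OF i] y1 by simp
      qed
      have dM: "\<forall>i<n. M $$ (i,i) \<noteq> 0"
      proof (intro allI impI notI)
        fix i assume i: "i < n" and "M $$ (i,i) = 0"
        then have "e i = 0" using cMd[OF i] by simp
        then show False using epos[OF i] by simp
      qed
      have hMd: "\<forall>i<n. nek_h M i < cmod (M $$ (i,i))" using cMd P1 by auto
      have wp: "cmod (w p) \<le> maxC"
        using nek_key[OF M dM hMd _ p, of w 1] Mw unfolding maxC_eq by auto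
      have "(\<Sum>j<n. cmod (B $$ (p,j))) = cmod (x p)" unfolding xp norm_of_real
        by (intro abs_of_nonneg[symmetric] sum_nonneg) auto
      also have "\<dots> = s p * cmod (w p)" unfolding w_def using spos[OF p] by (simp add: norm_divide)
      also have "\<dots> \<le> maxS * maxC"
        using sMax[OF p] spos[OF p] wp maxS0 by (intro mult_mono) auto
      finally show ?thesis .
    qed
    have "norm_inf_mat B = Max ({0} \<union> (\<lambda>i. \<Sum>j<n. cmod (B $$ (i,j))) ` {..<n})"
      unfolding norm_inf_mat_def using B by auto
    also have "\<dots> \<le> maxS * maxC"
      using row maxS0 maxC0 by (subst Max_le_iff) auto
    finally show ?thesis .
  qed
  show ?thesis using part1 part2 part3 unfolding maxS_def maxC_def by blast
qed

end
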